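(* Let $n\in\mathbb{N}$, let $p,q:\mathbb{R}^n\to\mathbb{R}$ be polynomials, let $\epsilon>0$, and let $a_j,b_j\in\mathbb{R}$ with $a_j<b_j$ for $j\in\{1,\dots,n\}$. Set $\Omega:=[a_1,b_1]\times[a_2,b_2]\times\dots\times[a_n,b_n]$ and assume that $\min_\Omega|q|>0$. Then \[ \left|\min_{\Omega,\epsilon}\frac{p}{q}-\min_\Omega\frac{p}{q}\right|\leq\frac{\epsilon}{\min_\Omega q^2},\qquad \left|\max_{\Omega,\epsilon}\frac{p}{q}-\max_\Omega\frac{p}{q}\right|\leq\frac{\epsilon}{\min_\Omega q^2}, \] and \[ \left|\left\|\frac{p}{q}\right\|_{L^\infty(\Omega,\epsilon)}-\left\|\frac{p}{q}\right\|_{L^\infty(\Omega)}\right|\leq\frac{\epsilon}{\min_\Omega q^2}. \]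
   Context: Chebyshev polynomials $T_m$ are defined by $T_m(\cos z)=\cos(mz)$. For a polynomial $P:\mathbb{C}^n\to\mathbb{C}$ written as $P(x^1,\dots,x^n)=\sum_{j_1,\dots,j_n} c_{j_1\dots j_n}T_{j_1}(x^1)\cdots T_{j_n}(x^n)$, its T-norm on $[-1,1]^n$ is $\sum|c_{j_1\dots j_n}|$; on a box $[a_1,b_1]\times\dots\times[a_n,b_n]$ the T-norm $\|P\|_{T(\cdot)}$ is the T-norm on $[-1,1]^n$ of $P$ composed with the affine maps $x\mapsto \frac{b_j-a_j}{2}x+\frac{a_j+b_j}{2}$ in each variable. With $\Omega$, $p$, $q$, $\epsilon$ as in the claim, set for $j\in\{1,\dots,n\}$ \[ M_j:=\min\left\{m\in\mathbb{N}: m\geq\frac{n}{\epsilon}(b_j-a_j)\|\partial_jp\,q-p\,\partial_jq\|_{T(\Omega)}\right\} \] and the grid \[ \Lambda:=\left\{\left(a_1+\tfrac{b_1-a_1}{M_1}k_1,\dots,a_n+\tfrac{b_n-a_n}{M_n}k_n\right): k_j\in[0,M_j]\cap\mathbb{Z}\right\}. \] Then by definition $\max_{\Omega,\epsilon}\frac{p}{q}:=\max_\Lambda\frac{p}{q}$, $\min_{\Omega,\epsilon}\frac{p}{q}:=\min_\Lambda\frac{p}{q}$, and $\left\|\frac{p}{q}\right\|_{L^\infty(\Omega,\epsilon)}:=\max_\Lambda\left|\frac{p}{q}\right|$. *)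

theory Defs
  imports "HOL-Analysis.Analysis"
begin

fun cheb :: "nat \<Rightarrow> real \<Rightarrow> real" where
  "cheb 0 x = 1"
| "cheb (Suc 0) x = x"
| "cheb (Suc (Suc m)) x = 2 * x * cheb (Suc m) x - cheb m x"

text \<open>Real polynomials on R^n (n = CARD('n)): finite linear combinations of monomials.\<close>
definition is_mpoly :: "(real^'n \<Rightarrow> real) \<Rightarrow> bool" where
  "is_mpoly f \<longleftrightarrow> (\<exists>A c. finite (A :: ('n \<Rightarrow> nat) set) \<and>
      (\<forall>x. f x = (\<Sum>\<alpha>\<in>A. c \<alpha> * (\<Prod>i\<in>UNIV. (x$i) ^ (\<alpha> i)))))"

definition partial :: "'n \<Rightarrow> (real^'n \<Rightarrow> real) \<Rightarrow> real^'n \<Rightarrow> real" where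
  "partial j f x = deriv (\<lambda>t. f (\<chi> i. if i = j then t else x$i)) (x$j)"

text \<open>T-norm on the box [a,b]: sum of absolute values of the Chebyshev coefficients of
  f composed with the coordinatewise affine maps from [-1,1] to [a_j,b_j].\<close>
definition tnorm :: "real^'n \<Rightarrow> real^'n \<Rightarrow> (real^'n \<Rightarrow> real) \<Rightarrow> real" where
  "tnorm a b f = (THE s. \<exists>A d. finite (A :: ('n \<Rightarrow> nat) set) \<and>
      (\<forall>x. f (\<chi> i. (b$i - a$i) / 2 * x$i + (a$i + b$i) / 2)
            = (\<Sum>\<alpha>\<in>A. d \<alpha> * (\<Prod>i\<in>UNIV. cheb (\<alpha> i) (x$i)))) \<and>
      s = (\<Sum>\<alpha>\<in>A. \<bar>d \<alpha>\<bar>))"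

text \<open>Number of grid subintervals in direction j (\<nat> read as positive integers).\<close>
definition gridM :: "real^'n \<Rightarrow> real^'n \<Rightarrow> real \<Rightarrow> (real^'n \<Rightarrow> real) \<Rightarrow> (real^'n \<Rightarrow> real)
      \<Rightarrow> 'n \<Rightarrow> nat" where
  "gridM a b eps p q j = (LEAST m::nat. 1 \<le> m \<and>
      real m \<ge> real CARD('n) / eps * (b$j - a$j) *
        tnorm a b (\<lambda>x. partial j p x * q x - p x * partial j q x))"

definition grid :: "real^'n \<Rightarrow> real^'n \<Rightarrow> real \<Rightarrow> (real^'n \<Rightarrow> real) \<Rightarrow> (real^'n \<Rightarrow> real)
      \<Rightarrow> (real^'n) set" where
  "grid a b eps p q = {x. \<exists>k :: 'n \<Rightarrow> nat. (\<forall>j. k j \<le> gridM a b eps p q j) \<and>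
      x = (\<chi> j. a$j + (b$j - a$j) / real (gridM a b eps p q j) * real (k j))}"

definition max_eps :: "real^'n \<Rightarrow> real^'n \<Rightarrow> real \<Rightarrow> (real^'n \<Rightarrow> real) \<Rightarrow> (real^'n \<Rightarrow> real) \<Rightarrow> real" where
  "max_eps a b eps p q = Max ((\<lambda>x. p x / q x) ` grid a b eps p q)"

definition min_eps :: "real^'n \<Rightarrow> real^'n \<Rightarrow> real \<Rightarrow> (real^'n \<Rightarrow> real) \<Rightarrow> (real^'n \<Rightarrow> real) \<Rightarrow> real" where
  "min_eps a b eps p q = Min ((\<lambda>x. p x / q x) ` grid a b eps p q)"

definition linf_eps :: "real^'n \<Rightarrow> real^'n \<Rightarrow> real \<Rightarrow> (real^'n \<Rightarrow> real) \<Rightarrow> (real^'n \<Rightarrow> real) \<Rightarrow> real" where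
  "linf_eps a b eps p q = Max ((\<lambda>x. \<bar>p x / q x\<bar>) ` grid a b eps p q)"

end

theory Submission
  imports Defs "HOL-Computational_Algebra.Polynomial"
begin


definition genrep :: "(('n \<Rightarrow> nat) \<Rightarrow> real^'n \<Rightarrow> real) \<Rightarrow> (real^'n \<Rightarrow> real) \<Rightarrow> bool" where
  "genrep B g \<longleftrightarrow> (\<exists>A d. finite (A :: ('n \<Rightarrow> nat) set) \<and> (\<forall>x. g x = (\<Sum>\<alpha>\<in>A. d \<alpha> * B \<alpha> x)))"

lemma genrep_zero: "genrep B (\<lambda>x. 0)"
  unfolding genrep_def by (rule exI[of _ "{}"]) auto

lemma genrep_single: "genrep B (\<lambda>x. c * B \<alpha> x)"
  unfolding genrep_def by (rule exI[of _ "{\<alpha>}"], rule exI[of _ "\<lambda>_. c"]) auto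

lemma genrep_scale: "genrep B f \<Longrightarrow> genrep B (\<lambda>x. c * f x)"
  unfolding genrep_def
proof (elim exE conjE)
  fix A d assume "finite A" "\<forall>x. f x = (\<Sum>\<alpha>\<in>A. d \<alpha> * B \<alpha> x)"
  then show "\<exists>A d. finite A \<and> (\<forall>x. c * f x = (\<Sum>\<alpha>\<in>A. d \<alpha> * B \<alpha> x))"
    by (intro exI[of _ A] exI[of _ "\<lambda>\<alpha>. c * d \<alpha>"]) (simp add: sum_distrib_left mult.assoc)
qed

lemma sum_extend:
  assumes "finite A" "finite C" "A \<subseteq> C"
  shows "(\<Sum>\<alpha>\<in>A. d \<alpha> * (F \<alpha> :: real)) = (\<Sum>\<alpha>\<in>C. (if \<alpha> \<in> A then d \<alpha> else 0) * F \<alpha>)"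
proof -
  have "(\<Sum>\<alpha>\<in>C. (if \<alpha> \<in> A then d \<alpha> else 0) * F \<alpha>) = (\<Sum>\<alpha>\<in>A. (if \<alpha> \<in> A then d \<alpha> else 0) * F \<alpha>)"
    using assms by (intro sum.mono_neutral_right) auto
  also have "\<dots> = (\<Sum>\<alpha>\<in>A. d \<alpha> * F \<alpha>)" by simp
  finally show ?thesis by simp
qed

lemma genrep_add: "genrep B f \<Longrightarrow> genrep B g \<Longrightarrow> genrep B (\<lambda>x. f x + g x)"
  unfolding genrep_def
proof (elim exE conjE)
  fix A d A' d' assume A: "finite A" "\<forall>x. f x = (\<Sum>\<alpha>\<in>A. d \<alpha> * B \<alpha> x)"
    and A': "finite A'" "\<forall>x. g x = (\<Sum>\<alpha>\<in>A'. d' \<alpha> * B \<alpha> x)"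
  show "\<exists>A d. finite A \<and> (\<forall>x. f x + g x = (\<Sum>\<alpha>\<in>A. d \<alpha> * B \<alpha> x))"
  proof (intro exI[of _ "A \<union> A'"] exI[of _ "\<lambda>\<alpha>. (if \<alpha> \<in> A then d \<alpha> else 0) + (if \<alpha> \<in> A' then d' \<alpha> else 0)"] conjI allI)
    show "finite (A \<union> A')" using A A' by simp
    fix x
    have "f x = (\<Sum>\<alpha>\<in>A \<union> A'. (if \<alpha> \<in> A then d \<alpha> else 0) * B \<alpha> x)"
      using A A' sum_extend[of A "A \<union> A'" d "\<lambda>\<alpha>. B \<alpha> x"] by auto
    moreover have "g x = (\<Sum>\<alpha>\<in>A \<union> A'. (if \<alpha> \<in> A' then d' \<alpha> else 0) * B \<alpha> x)"
      using A A' sum_extend[of A' "A \<union> A'" d' "\<lambda>\<alpha>. B \<alpha> x"] by auto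
    ultimately show "f x + g x = (\<Sum>\<alpha>\<in>A \<union> A'. ((if \<alpha> \<in> A then d \<alpha> else 0) + (if \<alpha> \<in> A' then d' \<alpha> else 0)) * B \<alpha> x)"
      by (simp add: sum.distrib distrib_right)
  qed
qed

lemma genrep_diff: "genrep B f \<Longrightarrow> genrep B g \<Longrightarrow> genrep B (\<lambda>x. f x - g x)"
  using genrep_add[of B f "\<lambda>x. (-1) * g x"] genrep_scale[of B g "-1"] by simp

lemma genrep_sum: "finite S \<Longrightarrow> (\<And>s. s \<in> S \<Longrightarrow> genrep B (f s)) \<Longrightarrow> genrep B (\<lambda>x. \<Sum>s\<in>S. f s x)"
proof (induction S rule: finite_induct)
  case empty then show ?case by (simp add: genrep_zero)
next
  case (insert s S) then show ?case by (simp add: genrep_add)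
qed

lemma genrep_cong: "genrep B f \<Longrightarrow> (\<And>x. f x = g x) \<Longrightarrow> genrep B g"
proof -
  assume "genrep B f" "\<And>x. f x = g x"
  then have "f = g" by auto
  then show ?thesis using \<open>genrep B f\<close> by simp
qed

lemma is_mpoly_genrep: "is_mpoly f \<longleftrightarrow> genrep (\<lambda>\<alpha> x. \<Prod>i\<in>UNIV. (x$i) ^ (\<alpha> i)) f"
  unfolding is_mpoly_def genrep_def by simp



lemma cheb_cos: "cheb m (cos z) = cos (real m * z)"
proof (induction m "cos z" rule: cheb.induct)
  case 1 then show ?case by simp
next
  case 2 then show ?case by simp
next
  case (3 m)
  have "cos (real (Suc (Suc m)) * z) = 2 * cos z * cos (real (Suc m) * z) - cos (real m * z)"
  proof -
    have e1: "real (Suc (Suc m)) * z = real (Suc m) * z + z" by (simp add: algebra_simps)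
    have e2: "real m * z = real (Suc m) * z - z" by (simp add: algebra_simps)
    show ?thesis unfolding e1 e2 cos_add cos_diff by simp
  qed
  then show ?case using 3 by simp
qed

lemma cheb_bound: "\<bar>u\<bar> \<le> 1 \<Longrightarrow> \<bar>cheb m u\<bar> \<le> 1"
proof -
  assume "\<bar>u\<bar> \<le> 1"
  then have "u = cos (arccos u)" by (simp add: cos_arccos_abs)
  then have "cheb m u = cos (real m * arccos u)" using cheb_cos by metis
  then show ?thesis by simp
qed

lemma cheb_xmult: "x * cheb m x = (if m = 0 then cheb 1 x else (cheb (Suc m) x + cheb (m - 1) x) / 2)"
proof (cases m)
  case 0 then show ?thesis by simp
next
  case (Suc k)
  then show ?thesis by (cases k) (simp_all add: algebra_simps)
qed

fun chebp :: "nat \<Rightarrow> real poly" where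
  "chebp 0 = 1"
| "chebp (Suc 0) = [:0, 1:]"
| "chebp (Suc (Suc m)) = smult 2 (pCons 0 (chebp (Suc m))) - chebp m"

lemma poly_chebp: "poly (chebp m) x = cheb m x"
  by (induction m rule: chebp.induct) (simp_all add: algebra_simps)

lemma coeff_chebp: "coeff (chebp m) m \<ge> 1 \<and> (\<forall>k>m. coeff (chebp m) k = 0)"
proof (induction m rule: chebp.induct)
  case 1 then show ?case by (simp add: coeff_1)
next
  case 2 then show ?case by (auto simp: coeff_pCons split: nat.splits)
next
  case (3 m)
  have a: "coeff (chebp (Suc (Suc m))) k = 2 * coeff (chebp (Suc m)) (k - 1) - coeff (chebp m) k" if "k > 0" for k
    using that by (cases k) (auto simp: coeff_pCons)
  show ?case
  proof
    show "1 \<le> coeff (chebp (Suc (Suc m))) (Suc (Suc m))" using 3 a[of "Suc (Suc m)"] by simp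
    show "\<forall>k>Suc (Suc m). coeff (chebp (Suc (Suc m))) k = 0"
    proof (intro allI impI)
      fix k assume "k > Suc (Suc m)"
      then show "coeff (chebp (Suc (Suc m))) k = 0" using 3 a[of k] by simp
    qed
  qed
qed

lemma cheb_indep1:
  assumes M: "finite M" and z: "\<And>t. (\<Sum>m\<in>M. g m * cheb m t) = 0"
  shows "\<forall>m\<in>M. g m = 0"
proof (rule ccontr)
  assume "\<not> (\<forall>m\<in>M. g m = 0)"
  define M' where "M' = {m\<in>M. g m \<noteq> 0}"
  have M'ne: "M' \<noteq> {}" "finite M'" using \<open>\<not> _\<close> M by (auto simp: M'_def)
  define m0 where "m0 = Max M'"
  have m0: "m0 \<in> M" "g m0 \<noteq> 0" using Max_in[OF M'ne(2) M'ne(1)] by (auto simp: m0_def M'_def)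
  have big: "m \<in> M \<Longrightarrow> g m \<noteq> 0 \<Longrightarrow> m \<le> m0" for m
    using Max_ge[OF M'ne(2)] by (auto simp: m0_def M'_def)
  define P where "P = (\<Sum>m\<in>M. smult (g m) (chebp m))"
  have "\<forall>t. poly P t = 0" using z by (simp add: P_def poly_sum poly_chebp)
  then have "P = 0" using poly_all_0_iff_0 by blast
  then have "0 = coeff P m0" by simp
  also have "\<dots> = (\<Sum>m\<in>M. g m * coeff (chebp m) m0)" by (simp add: P_def coeff_sum)
  also have "\<dots> = (\<Sum>m\<in>{m0}. g m * coeff (chebp m) m0)"
  proof (rule sum.mono_neutral_right)
    show "\<forall>i\<in>M - {m0}. g i * coeff (chebp i) m0 = 0"
    proof
      fix i assume i: "i \<in> M - {m0}"
      show "g i * coeff (chebp i) m0 = 0"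
      proof (cases "g i = 0")
        case False
        then have "i < m0" using big[of i] i by auto
        then show ?thesis using coeff_chebp[of i] by simp
      qed simp
    qed
  qed (use M m0 in auto)
  also have "\<dots> = g m0 * coeff (chebp m0) m0" by simp
  finally show False using m0(2) coeff_chebp[of m0] by simp
qed



definition T :: "('n \<Rightarrow> nat) \<Rightarrow> real^'n \<Rightarrow> real" where
  "T \<alpha> x = (\<Prod>i\<in>UNIV. cheb (\<alpha> i) (x$i))"

lemma tensor_indep_gen:
  fixes I :: "'n::finite set"
  assumes "finite I"
  shows "\<forall>(C::('n \<Rightarrow> nat) set) c. finite C \<longrightarrow> (\<forall>x::real^'n. (\<Sum>\<alpha>\<in>C. c \<alpha> * (\<Prod>i\<in>I. cheb (\<alpha> i) (x$i))) = 0)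
     \<longrightarrow> (\<forall>\<alpha>\<in>C. (\<Sum>\<beta>\<in>{\<beta>\<in>C. \<forall>i\<in>I. \<beta> i = \<alpha> i}. c \<beta>) = 0)"
using assms proof (induction I rule: finite_induct)
  case empty
  show ?case by simp
next
  case (insert j I)
  show ?case
  proof (intro allI impI ballI)
    fix C :: "('n \<Rightarrow> nat) set" and c and \<alpha>
    assume C: "finite C" and hz: "\<forall>x::real^'n. (\<Sum>\<alpha>\<in>C. c \<alpha> * (\<Prod>i\<in>insert j I. cheb (\<alpha> i) (x$i))) = 0"
      and \<alpha>: "\<alpha> \<in> C"
    define G where "G m x = (\<Sum>\<beta>\<in>{\<beta>\<in>C. \<beta> j = m}. c \<beta> * (\<Prod>i\<in>I. cheb (\<beta> i) (x$i)))" for m and x :: "real^'n"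
    have split: "(\<Sum>\<beta>\<in>C. c \<beta> * (\<Prod>i\<in>insert j I. cheb (\<beta> i) (x$i))) = (\<Sum>m\<in>(\<lambda>\<beta>. \<beta> j) ` C. G m x * cheb m (x$j))" for x :: "real^'n"
    proof -
      have "(\<Sum>\<beta>\<in>C. c \<beta> * (\<Prod>i\<in>insert j I. cheb (\<beta> i) (x$i))) =
            (\<Sum>m\<in>(\<lambda>\<beta>. \<beta> j) ` C. \<Sum>\<beta>\<in>{\<beta>\<in>C. \<beta> j = m}. c \<beta> * (\<Prod>i\<in>insert j I. cheb (\<beta> i) (x$i)))"
        using C by (rule sum.image_gen)
      also have "\<dots> = (\<Sum>m\<in>(\<lambda>\<beta>. \<beta> j) ` C. G m x * cheb m (x$j))"
      proof (rule sum.cong[OF refl])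
        fix m
        have "(\<Sum>\<beta>\<in>{\<beta>\<in>C. \<beta> j = m}. c \<beta> * (\<Prod>i\<in>insert j I. cheb (\<beta> i) (x$i)))
            = (\<Sum>\<beta>\<in>{\<beta>\<in>C. \<beta> j = m}. c \<beta> * (\<Prod>i\<in>I. cheb (\<beta> i) (x$i)) * cheb m (x$j))"
          using insert.hyps by (intro sum.cong) (auto simp: prod.insert)
        also have "\<dots> = G m x * cheb m (x$j)" by (simp add: G_def sum_distrib_right)
        finally show "(\<Sum>\<beta>\<in>{\<beta>\<in>C. \<beta> j = m}. c \<beta> * (\<Prod>i\<in>insert j I. cheb (\<beta> i) (x$i))) = G m x * cheb m (x$j)" .
      qed
      finally show ?thesis .
    qed
    have Gindep: "G m (\<chi> i. if i = j then t else x$i) = G m x" for m t x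
      proof -
      have P: "(\<Prod>i\<in>I. cheb (\<beta> i) ((\<chi> i. if i = j then t else x$i)$i)) = (\<Prod>i\<in>I. cheb (\<beta> i) (x$i))" for \<beta>
        using insert.hyps by (intro prod.cong refl) auto
      show ?thesis unfolding G_def by (intro sum.cong refl arg_cong2[where f="(*)"] P)
    qed
    have G0: "G m x = 0" if "m \<in> (\<lambda>\<beta>. \<beta> j) ` C" for m x
    proof -
      have "\<forall>t. (\<Sum>m\<in>(\<lambda>\<beta>. \<beta> j) ` C. G m x * cheb m t) = 0"
      proof
        fix t
        define xt where "xt = (\<chi> i. if i = j then t else x$i)"
        have "0 = (\<Sum>\<beta>\<in>C. c \<beta> * (\<Prod>i\<in>insert j I. cheb (\<beta> i) (xt$i)))"
          by (rule hz[rule_format, symmetric])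
        also have "\<dots> = (\<Sum>m\<in>(\<lambda>\<beta>. \<beta> j) ` C. G m xt * cheb m (xt$j))" by (rule split)
        finally have "0 = (\<Sum>m\<in>(\<lambda>\<beta>. \<beta> j) ` C. G m (\<chi> i. if i = j then t else x$i) * cheb m ((\<chi> i. if i = j then t else x$i)$j))"
          unfolding xt_def .
        then show "(\<Sum>m\<in>(\<lambda>\<beta>. \<beta> j) ` C. G m x * cheb m t) = 0" by (simp add: Gindep)
      qed
      then show ?thesis using cheb_indep1[of "(\<lambda>\<beta>. \<beta> j) ` C" "\<lambda>m. G m x"] C that by blast
    qed
    define Cm where "Cm = {\<beta>\<in>C. \<beta> j = \<alpha> j}"
    have "finite Cm" using C by (simp add: Cm_def)
    moreover have "\<forall>x::real^'n. (\<Sum>\<beta>\<in>Cm. c \<beta> * (\<Prod>i\<in>I. cheb (\<beta> i) (x$i))) = 0"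
      using G0[of "\<alpha> j"] \<alpha> by (simp add: G_def Cm_def)
    moreover have "\<alpha> \<in> Cm" using \<alpha> by (simp add: Cm_def)
    ultimately have "(\<Sum>\<beta>\<in>{\<beta>\<in>Cm. \<forall>i\<in>I. \<beta> i = \<alpha> i}. c \<beta>) = 0"
      using insert.IH by blast
    moreover have "{\<beta>\<in>Cm. \<forall>i\<in>I. \<beta> i = \<alpha> i} = {\<beta>\<in>C. \<forall>i\<in>insert j I. \<beta> i = \<alpha> i}"
      by (auto simp: Cm_def)
    ultimately show "(\<Sum>\<beta>\<in>{\<beta>\<in>C. \<forall>i\<in>insert j I. \<beta> i = \<alpha> i}. c \<beta>) = 0" by simp
  qed
qed

lemma tensor_indep:
  fixes C :: "('n::finite \<Rightarrow> nat) set"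
  assumes "finite C" "\<And>x::real^'n. (\<Sum>\<alpha>\<in>C. c \<alpha> * T \<alpha> x) = 0" "\<alpha> \<in> C"
  shows "c \<alpha> = 0"
proof -
  have "(\<Sum>\<beta>\<in>{\<beta>\<in>C. \<forall>i\<in>UNIV. \<beta> i = \<alpha> i}. c \<beta>) = 0"
    using tensor_indep_gen[of "UNIV :: 'n set", OF finite] assms unfolding T_def by blast
  moreover have "{\<beta>\<in>C. \<forall>i\<in>UNIV. \<beta> i = \<alpha> i} = {\<alpha>}" using assms(3) by (auto simp: fun_eq_iff)
  ultimately show ?thesis by simp
qed

lemma sum_extend2:
  assumes "finite C" "A \<subseteq> C"
  shows "(\<Sum>\<alpha>\<in>A. (h \<alpha> :: real)) = (\<Sum>\<alpha>\<in>C. (if \<alpha> \<in> A then h \<alpha> else 0))"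
proof -
  have "(\<Sum>\<alpha>\<in>C. (if \<alpha> \<in> A then h \<alpha> else 0)) = (\<Sum>\<alpha>\<in>A. (if \<alpha> \<in> A then h \<alpha> else 0))"
    using assms by (intro sum.mono_neutral_right) (auto intro: finite_subset)
  then show ?thesis by simp
qed

lemma abs_sum_unique:
  fixes A A' :: "('n::finite \<Rightarrow> nat) set"
  assumes A: "finite A" "finite A'"
    and eq: "\<And>x::real^'n. (\<Sum>\<alpha>\<in>A. d \<alpha> * T \<alpha> x) = (\<Sum>\<alpha>\<in>A'. d' \<alpha> * T \<alpha> x)"
  shows "(\<Sum>\<alpha>\<in>A. \<bar>d \<alpha>\<bar>) = (\<Sum>\<alpha>\<in>A'. \<bar>d' \<alpha>\<bar>)"
proof -
  define C where "C = A \<union> A'"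
  define e where "e \<alpha> = (if \<alpha> \<in> A then d \<alpha> else 0)" for \<alpha>
  define e' where "e' \<alpha> = (if \<alpha> \<in> A' then d' \<alpha> else 0)" for \<alpha>
  have C: "finite C" "A \<subseteq> C" "A' \<subseteq> C" using A by (auto simp: C_def)
  have "(\<Sum>\<alpha>\<in>C. (e \<alpha> - e' \<alpha>) * T \<alpha> x) = 0" for x :: "real^'n"
  proof -
    have "(\<Sum>\<alpha>\<in>A. d \<alpha> * T \<alpha> x) = (\<Sum>\<alpha>\<in>C. e \<alpha> * T \<alpha> x)"
      using sum_extend[of A C d "\<lambda>\<alpha>. T \<alpha> x"] A C by (simp add: e_def)
    moreover have "(\<Sum>\<alpha>\<in>A'. d' \<alpha> * T \<alpha> x) = (\<Sum>\<alpha>\<in>C. e' \<alpha> * T \<alpha> x)"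
      using sum_extend[of A' C d' "\<lambda>\<alpha>. T \<alpha> x"] A C by (simp add: e'_def)
    ultimately show ?thesis using eq[of x] by (simp add: left_diff_distrib sum_subtractf)
  qed
  then have ee: "\<alpha> \<in> C \<Longrightarrow> e \<alpha> = e' \<alpha>" for \<alpha>
    using tensor_indep[of C "\<lambda>\<alpha>. e \<alpha> - e' \<alpha>"] C by auto
  have "(\<Sum>\<alpha>\<in>A. \<bar>d \<alpha>\<bar>) = (\<Sum>\<alpha>\<in>C. \<bar>e \<alpha>\<bar>)"
    using sum_extend2[OF C(1) C(2), of "\<lambda>\<alpha>. \<bar>d \<alpha>\<bar>"] by (simp add: e_def if_distrib)
  also have "\<dots> = (\<Sum>\<alpha>\<in>C. \<bar>e' \<alpha>\<bar>)" using ee by simp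
  also have "\<dots> = (\<Sum>\<alpha>\<in>A'. \<bar>d' \<alpha>\<bar>)"
    using sum_extend2[OF C(1) C(3), of "\<lambda>\<alpha>. \<bar>d' \<alpha>\<bar>"] by (simp add: e'_def if_distrib)
  finally show ?thesis .
qed

lemma tnorm_eq:
  fixes a b :: "real^'n" and f :: "real^'n \<Rightarrow> real"
  assumes A: "finite A" and rep: "\<And>x. f (\<chi> i. (b$i - a$i) / 2 * x$i + (a$i + b$i) / 2) = (\<Sum>\<alpha>\<in>A. d \<alpha> * T \<alpha> x)"
  shows "tnorm a b f = (\<Sum>\<alpha>\<in>A. \<bar>d \<alpha>\<bar>)"
  unfolding tnorm_def
proof (rule the_equality)
  show "\<exists>A' d'. finite A' \<and> (\<forall>x. f (\<chi> i. (b$i - a$i) / 2 * x$i + (a$i + b$i) / 2) = (\<Sum>\<alpha>\<in>A'. d' \<alpha> * (\<Prod>i\<in>UNIV. cheb (\<alpha> i) (x$i)))) \<and> (\<Sum>\<alpha>\<in>A. \<bar>d \<alpha>\<bar>) = (\<Sum>\<alpha>\<in>A'. \<bar>d' \<alpha>\<bar>)"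
    using A rep unfolding T_def by blast
next
  fix s assume "\<exists>A' d'. finite A' \<and> (\<forall>x. f (\<chi> i. (b$i - a$i) / 2 * x$i + (a$i + b$i) / 2) = (\<Sum>\<alpha>\<in>A'. d' \<alpha> * (\<Prod>i\<in>UNIV. cheb (\<alpha> i) (x$i)))) \<and> s = (\<Sum>\<alpha>\<in>A'. \<bar>d' \<alpha>\<bar>)"
  then obtain A' d' where A': "finite A'" "\<And>x. f (\<chi> i. (b$i - a$i) / 2 * x$i + (a$i + b$i) / 2) = (\<Sum>\<alpha>\<in>A'. d' \<alpha> * T \<alpha> x)" "s = (\<Sum>\<alpha>\<in>A'. \<bar>d' \<alpha>\<bar>)"
    unfolding T_def by blast
  show "s = (\<Sum>\<alpha>\<in>A. \<bar>d \<alpha>\<bar>)" using abs_sum_unique[OF A'(1) A, of d' d] A' rep by simp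
qed

lemma tnorm_bound:
  fixes a b :: "real^'n" and f :: "real^'n \<Rightarrow> real"
  assumes rep: "genrep T (\<lambda>x. f (\<chi> i. (b$i - a$i) / 2 * x$i + (a$i + b$i) / 2))"
    and ab: "\<forall>i. a$i < b$i" and x: "x \<in> cbox a b"
  shows "\<bar>f x\<bar> \<le> tnorm a b f"
proof -
  obtain A d where A: "finite A" "\<And>x. f (\<chi> i. (b$i - a$i) / 2 * x$i + (a$i + b$i) / 2) = (\<Sum>\<alpha>\<in>A. d \<alpha> * T \<alpha> x)"
    using rep unfolding genrep_def by blast
  define u where "u = (\<chi> i. (2 * x$i - a$i - b$i) / (b$i - a$i))"
  have xi: "a$i \<le> x$i" "x$i \<le> b$i" for i using x by (auto simp: mem_box_cart)
  have Lu: "(\<chi> i. (b$i - a$i) / 2 * u$i + (a$i + b$i) / 2) = x"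
  proof (subst vec_eq_iff, intro allI)
    fix i
    have "b$i - a$i \<noteq> 0" using ab[rule_format, of i] by simp
    then show "(\<chi> i. (b$i - a$i) / 2 * u$i + (a$i + b$i) / 2) $ i = x $ i"
      by (simp add: u_def field_simps)
  qed
  have ub: "\<bar>u$i\<bar> \<le> 1" for i
  proof -
    have d: "b$i - a$i > 0" using ab[rule_format, of i] by simp
    have "-(b$i - a$i) \<le> 2 * x$i - a$i - b$i" "2 * x$i - a$i - b$i \<le> b$i - a$i" using xi[of i] by auto
    then show ?thesis using d by (simp add: u_def abs_le_iff divide_le_eq le_divide_eq)
  qed
  have Tb: "\<bar>T \<alpha> u\<bar> \<le> 1" for \<alpha>
    unfolding T_def abs_prod using cheb_bound[OF ub] by (intro prod_le_1) auto
  have "\<bar>f x\<bar> = \<bar>\<Sum>\<alpha>\<in>A. d \<alpha> * T \<alpha> u\<bar>" using A(2)[of u] Lu by simp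
  also have "\<dots> \<le> (\<Sum>\<alpha>\<in>A. \<bar>d \<alpha> * T \<alpha> u\<bar>)" by (rule sum_abs)
  also have "\<dots> \<le> (\<Sum>\<alpha>\<in>A. \<bar>d \<alpha>\<bar>)"
    by (intro sum_mono) (simp add: abs_mult mult_left_le[OF Tb])
  also have "\<dots> = tnorm a b f" using tnorm_eq[OF A] by simp
  finally show ?thesis .
qed



lemma T_split: "T \<alpha> x = cheb (\<alpha> j) (x$j) * (\<Prod>i\<in>UNIV-{j}. cheb (\<alpha> i) (x$i))"
  unfolding T_def by (simp add: prod.remove)

lemma T_upd: "T (\<alpha>(j:=m)) x = cheb m (x$j) * (\<Prod>i\<in>UNIV-{j}. cheb (\<alpha> i) (x$i))"
proof -
  have "(\<Prod>i\<in>UNIV-{j}. cheb ((\<alpha>(j:=m)) i) (x$i)) = (\<Prod>i\<in>UNIV-{j}. cheb (\<alpha> i) (x$i))"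
    by (intro prod.cong) auto
  then show ?thesis using T_split[of "\<alpha>(j:=m)" x j] by simp
qed

lemma xj_T: "x$j * T \<alpha> x = (if \<alpha> j = 0 then T (\<alpha>(j:=1)) x
   else (T (\<alpha>(j:=Suc (\<alpha> j))) x + T (\<alpha>(j:=\<alpha> j - 1)) x) / 2)"
proof (cases "\<alpha> j = 0")
  case True
  then show ?thesis unfolding T_upd T_split[of \<alpha> x j] by simp
next
  case False
  define R where "R = (\<Prod>i\<in>UNIV-{j}. cheb (\<alpha> i) (x$i))"
  have e: "x$j * cheb (\<alpha> j) (x$j) = (cheb (Suc (\<alpha> j)) (x$j) + cheb (\<alpha> j - 1) (x$j))/2"
    using cheb_xmult[of "x$j" "\<alpha> j"] False by simp
  have "x$j * (cheb (\<alpha> j) (x$j) * R) = (x$j * cheb (\<alpha> j) (x$j)) * R" by (simp only: mult.assoc)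
  also have "\<dots> = (cheb (Suc (\<alpha> j)) (x$j) * R + cheb (\<alpha> j - 1) (x$j) * R)/2"
    unfolding e by (simp add: field_simps)
  finally show ?thesis using False unfolding T_upd T_split[of \<alpha> x j] R_def by simp
qed

lemma rep_T: "genrep T (\<lambda>x. c * T \<alpha> x)" by (rule genrep_single)

lemma rep_coord: "genrep T f \<Longrightarrow> genrep T (\<lambda>x. x$j * f x)"
proof -
  assume "genrep T f"
  then obtain A d where A: "finite A" "\<And>x. f x = (\<Sum>\<alpha>\<in>A. d \<alpha> * T \<alpha> x)" unfolding genrep_def by blast
  have "genrep T (\<lambda>x. \<Sum>\<alpha>\<in>A. d \<alpha> * (x$j * T \<alpha> x))"
  proof (rule genrep_sum[OF A(1)])
    fix \<alpha>
    show "genrep T (\<lambda>x. d \<alpha> * (x$j * T \<alpha> x))"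
    proof (cases "\<alpha> j = 0")
      case True
      then show ?thesis using rep_T[of "d \<alpha>" "\<alpha>(j:=1)"] by (simp add: xj_T)
    next
      case False
      have "genrep T (\<lambda>x. (d \<alpha> / 2) * T (\<alpha>(j:=Suc (\<alpha> j))) x + (d \<alpha> / 2) * T (\<alpha>(j:=\<alpha> j - 1)) x)"
        by (intro genrep_add rep_T)
      then show ?thesis
        by (rule genrep_cong) (subst xj_T, simp add: False field_simps)
    qed
  qed
  then show ?thesis using A(2) by (simp add: sum_distrib_left algebra_simps)
qed

lemma rep_aff_pow: "genrep T f \<Longrightarrow> genrep T (\<lambda>x. (s * x$j + t)^m * f x)"
proof (induction m)
  case 0 then show ?case by simp
next
  case (Suc m)
  define h where "h x = (s * x$j + t)^m * f x" for x :: "real^'a"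
  have "genrep T h" unfolding h_def by (rule Suc.IH[OF Suc.prems])
  then have "genrep T (\<lambda>x. s * (x$j * h x) + t * h x)"
    by (intro genrep_add genrep_scale rep_coord)
  then show ?case by (simp add: h_def algebra_simps)
qed

lemma rep_aff_prod: "finite I \<Longrightarrow> genrep T f \<Longrightarrow> genrep T (\<lambda>x. (\<Prod>i\<in>I. (s i * x$i + t i)^(k i)) * f x)"
proof (induction I rule: finite_induct)
  case empty then show ?case by simp
next
  case (insert j I)
  then have "genrep T (\<lambda>x. (s j * x$j + t j)^(k j) * ((\<Prod>i\<in>I. (s i * x$i + t i)^(k i)) * f x))"
    by (intro rep_aff_pow) simp
  then show ?case using insert by (simp add: algebra_simps)
qed

lemma rep_one: "genrep T (\<lambda>x. 1)"
  using rep_T[of 1 "\<lambda>_. 0"] by (simp add: T_def)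

lemma mpoly_affine:
  fixes P :: "real^'n \<Rightarrow> real"
  assumes "is_mpoly P"
  shows "genrep T (\<lambda>x. P (\<chi> i. s i * x$i + t i))"
proof -
  obtain A c where A: "finite A" "\<And>x. P x = (\<Sum>\<alpha>\<in>A. c \<alpha> * (\<Prod>i\<in>UNIV. (x$i) ^ (\<alpha> i)))"
    using assms unfolding is_mpoly_def by blast
  have "genrep T (\<lambda>x. \<Sum>\<alpha>\<in>A. c \<alpha> * ((\<Prod>i\<in>UNIV. (s i * x$i + t i)^(\<alpha> i)) * 1))"
    by (intro genrep_sum[OF A(1)] genrep_scale rep_aff_prod rep_one) simp
  then show ?thesis by (simp add: A(2))
qed



lemma differentiable_prod_fin:
  fixes f :: "'i \<Rightarrow> 'a::real_normed_vector \<Rightarrow> real"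
  shows "finite I \<Longrightarrow> (\<And>i. i \<in> I \<Longrightarrow> f i differentiable (at x)) \<Longrightarrow> (\<lambda>x. \<Prod>i\<in>I. f i x) differentiable (at x)"
proof (induction I rule: finite_induct)
  case empty then show ?case by simp
next
  case (insert i I)
  then have "(\<lambda>x. f i x * (\<Prod>i\<in>I. f i x)) differentiable (at x)" by (intro differentiable_mult) auto
  then show ?case using insert.hyps by simp
qed

lemma mpoly_differentiable:
  fixes p :: "real^'n \<Rightarrow> real"
  assumes "is_mpoly p"
  shows "p differentiable (at x)"
proof -
  obtain A c where A: "finite A" "\<And>x. p x = (\<Sum>\<alpha>\<in>A. c \<alpha> * (\<Prod>i\<in>UNIV. (x$i) ^ (\<alpha> i)))"
    using assms unfolding is_mpoly_def by blast
  have "p = (\<lambda>x. \<Sum>\<alpha>\<in>A. c \<alpha> * (\<Prod>i\<in>UNIV. (x$i) ^ (\<alpha> i)))" using A(2) by auto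
  moreover have "(\<lambda>x::real^'n. \<Sum>\<alpha>\<in>A. c \<alpha> * (\<Prod>i\<in>UNIV. (x$i) ^ (\<alpha> i))) differentiable (at x)"
  proof -
    have comp: "(\<lambda>x::real^'n. x$i) differentiable (at x)" for i
      by (rule bounded_linear_imp_differentiable) (rule bounded_linear_vec_nth)
    have mon_d: "(\<lambda>x::real^'n. \<Prod>i\<in>UNIV. (x$i) ^ (\<alpha> i)) differentiable (at x)" for \<alpha>
      by (intro differentiable_prod_fin differentiable_power comp) auto
    show ?thesis by (rule differentiable_sum[OF A(1)]) (intro ballI differentiable_mult differentiable_const mon_d)
  qed
  ultimately show ?thesis by simp
qed

lemma partial_frechet:
  fixes p :: "real^'n \<Rightarrow> real"
  assumes D: "(p has_derivative D) (at x)"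
  shows "partial j p x = D (axis j 1)"
proof -
  define f where "f t = x + (t - x$j) *\<^sub>R axis j 1" for t :: real
  have f: "(f has_derivative (\<lambda>s. s *\<^sub>R axis j 1)) (at (x$j))"
    unfolding f_def by (auto intro!: derivative_eq_intros)
  have fx: "f (x$j) = x" by (simp add: f_def)
  have "((p \<circ> f) has_derivative (D \<circ> (\<lambda>s. s *\<^sub>R axis j 1))) (at (x$j))"
    by (rule diff_chain_at[OF f]) (simp add: fx D)
  moreover have "D \<circ> (\<lambda>s. s *\<^sub>R axis j 1) = (\<lambda>s. D (axis j 1) * s)"
    using linear_scale[OF has_derivative_linear[OF D]] by (auto simp: fun_eq_iff)
  moreover have "p \<circ> f = (\<lambda>t. p (\<chi> i. if i = j then t else x$i))"
    by (auto simp: fun_eq_iff f_def vec_eq_iff axis_def intro!: arg_cong[where f=p])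
  ultimately have "((\<lambda>t. p (\<chi> i. if i = j then t else x$i)) has_field_derivative D (axis j 1)) (at (x$j))"
    by (simp add: has_field_derivative_def)
  then show ?thesis unfolding partial_def by (rule DERIV_imp_deriv)
qed

definition mon :: "('n \<Rightarrow> nat) \<Rightarrow> real^'n \<Rightarrow> real" where
  "mon \<alpha> x = (\<Prod>i\<in>UNIV. (x$i) ^ (\<alpha> i))"

lemma is_mpoly_mon: "is_mpoly f \<longleftrightarrow> genrep mon f"
  unfolding is_mpoly_genrep mon_def by simp

lemma mpoly_mult: "is_mpoly f \<Longrightarrow> is_mpoly g \<Longrightarrow> is_mpoly (\<lambda>x. f x * g x)"
proof -
  assume "is_mpoly f" "is_mpoly g"
  then obtain A c B d where A: "finite A" "\<And>x. f x = (\<Sum>\<alpha>\<in>A. c \<alpha> * mon \<alpha> x)"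
    and B: "finite B" "\<And>x. g x = (\<Sum>\<alpha>\<in>B. d \<alpha> * mon \<alpha> x)"
    unfolding is_mpoly_mon genrep_def by blast
  have mm: "mon \<alpha> x * mon \<beta> x = mon (\<lambda>i. \<alpha> i + \<beta> i) x" for \<alpha> \<beta> x
    unfolding mon_def by (simp add: prod.distrib power_add)
  have "genrep mon (\<lambda>x. \<Sum>\<alpha>\<in>A. \<Sum>\<beta>\<in>B. (c \<alpha> * d \<beta>) * mon (\<lambda>i. \<alpha> i + \<beta> i) x)"
    by (intro genrep_sum A B genrep_single)
  moreover have "(\<Sum>\<alpha>\<in>A. \<Sum>\<beta>\<in>B. (c \<alpha> * d \<beta>) * mon (\<lambda>i. \<alpha> i + \<beta> i) x) = f x * g x" for x
    unfolding A(2) B(2) sum_product by (intro sum.cong refl) (simp add: mm[symmetric] algebra_simps)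
  ultimately show ?thesis unfolding is_mpoly_mon by (rule genrep_cong)
qed

lemma mpoly_diff: "is_mpoly f \<Longrightarrow> is_mpoly g \<Longrightarrow> is_mpoly (\<lambda>x. f x - g x)"
  unfolding is_mpoly_mon by (rule genrep_diff)

lemma mon_split: "mon \<alpha> x = (x$j)^(\<alpha> j) * (\<Prod>i\<in>UNIV-{j}. (x$i)^(\<alpha> i))"
  unfolding mon_def by (simp add: prod.remove)

lemma mon_upd: "mon (\<alpha>(j:=m)) x = (x$j)^m * (\<Prod>i\<in>UNIV-{j}. (x$i)^(\<alpha> i))"
proof -
  have "(\<Prod>i\<in>UNIV-{j}. (x$i)^((\<alpha>(j:=m)) i)) = (\<Prod>i\<in>UNIV-{j}. (x$i)^(\<alpha> i))"
    by (intro prod.cong) auto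
  then show ?thesis using mon_split[of "\<alpha>(j:=m)" x j] by simp
qed

lemma mpoly_partial:
  fixes p :: "real^'n \<Rightarrow> real"
  assumes "is_mpoly p"
  shows "is_mpoly (partial j p)"
proof -
  obtain A c where A: "finite A" "\<And>x. p x = (\<Sum>\<alpha>\<in>A. c \<alpha> * mon \<alpha> x)"
    using assms unfolding is_mpoly_mon genrep_def by blast
  define R where "R \<alpha> x = (\<Prod>i\<in>UNIV-{j}. (x$i)^(\<alpha> i))" for \<alpha> and x :: "real^'n"
  have pe: "partial j p x = (\<Sum>\<alpha>\<in>A. (c \<alpha> * real (\<alpha> j)) * mon (\<alpha>(j := \<alpha> j - Suc 0)) x)" for x
  proof -
    have Rx: "R \<alpha> (\<chi> i. if i = j then t else x$i) = R \<alpha> x" for \<alpha> t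
      unfolding R_def by (intro prod.cong) auto
    have "p (\<chi> i. if i = j then t else x$i) = (\<Sum>\<alpha>\<in>A. c \<alpha> * (t^(\<alpha> j) * R \<alpha> x))" for t
      unfolding A(2) using mon_split[of _ "\<chi> i. if i = j then t else x$i" j] Rx
      by (simp add: R_def[symmetric])
    then have eq: "(\<lambda>t. p (\<chi> i. if i = j then t else x$i)) = (\<lambda>t. \<Sum>\<alpha>\<in>A. c \<alpha> * (t^(\<alpha> j) * R \<alpha> x))" by auto
    have "((\<lambda>t. \<Sum>\<alpha>\<in>A. c \<alpha> * (t^(\<alpha> j) * R \<alpha> x)) has_field_derivative
       (\<Sum>\<alpha>\<in>A. c \<alpha> * (real (\<alpha> j) * (x$j)^(\<alpha> j - Suc 0) * R \<alpha> x))) (at (x$j))"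
      by (intro DERIV_sum DERIV_cmult DERIV_cmult_right DERIV_pow)
    then have "partial j p x = (\<Sum>\<alpha>\<in>A. c \<alpha> * (real (\<alpha> j) * (x$j)^(\<alpha> j - Suc 0) * R \<alpha> x))"
      unfolding partial_def eq by (rule DERIV_imp_deriv)
    also have "\<dots> = (\<Sum>\<alpha>\<in>A. (c \<alpha> * real (\<alpha> j)) * mon (\<alpha>(j := \<alpha> j - Suc 0)) x)"
      by (intro sum.cong refl) (simp add: mon_upd R_def)
    finally show ?thesis .
  qed
  have "genrep mon (\<lambda>x. \<Sum>\<alpha>\<in>A. (c \<alpha> * real (\<alpha> j)) * mon (\<alpha>(j := \<alpha> j - Suc 0)) x)"
    by (intro genrep_sum A genrep_single)
  then show ?thesis unfolding is_mpoly_mon by (rule genrep_cong) (simp add: pe)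
qed



lemma approx_minmax:
  fixes h :: "'a \<Rightarrow> real"
  assumes GS: "G \<subseteq> S" and fin: "finite G" and ne: "G \<noteq> {}"
    and near: "\<forall>x\<in>S. \<exists>y\<in>G. \<bar>h x - h y\<bar> \<le> \<delta>"
  shows "\<bar>Min (h ` G) - (INF x\<in>S. h x)\<bar> \<le> \<delta> \<and> \<bar>Max (h ` G) - (SUP x\<in>S. h x)\<bar> \<le> \<delta>"
proof -
  have Sne: "S \<noteq> {}" using GS ne by auto
  have fin': "finite (h ` G)" "h ` G \<noteq> {}" using fin ne by auto
  obtain y0 where y0: "y0 \<in> G" "Min (h ` G) = h y0" using Min_in[OF fin'] by auto
  obtain y1 where y1: "y1 \<in> G" "Max (h ` G) = h y1" using Max_in[OF fin'] by auto
  have lowb: "Min (h ` G) - \<delta> \<le> h x" if xS: "x \<in> S" for x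
  proof -
    obtain y where "y \<in> G" "\<bar>h x - h y\<bar> \<le> \<delta>" using near xS by auto
    moreover have "Min (h ` G) \<le> h y" using fin' \<open>y \<in> G\<close> by simp
    ultimately show ?thesis by linarith
  qed
  have upb: "h x \<le> Max (h ` G) + \<delta>" if xS: "x \<in> S" for x
  proof -
    obtain y where "y \<in> G" "\<bar>h x - h y\<bar> \<le> \<delta>" using near xS by auto
    moreover have "h y \<le> Max (h ` G)" using fin' \<open>y \<in> G\<close> by simp
    ultimately show ?thesis by linarith
  qed
  have bb: "bdd_below (h ` S)" unfolding bdd_below_def by (intro exI[of _ "Min (h ` G) - \<delta>"]) (auto simp: lowb)
  have ba: "bdd_above (h ` S)" unfolding bdd_above_def by (intro exI[of _ "Max (h ` G) + \<delta>"]) (auto simp: upb)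
  have "(INF x\<in>S. h x) \<le> h y0" using GS y0(1) bb by (auto intro: cINF_lower)
  moreover have "Min (h ` G) - \<delta> \<le> (INF x\<in>S. h x)" using Sne lowb by (intro cINF_greatest) auto
  moreover have "h y1 \<le> (SUP x\<in>S. h x)" using GS y1(1) ba by (auto intro: cSUP_upper)
  moreover have "(SUP x\<in>S. h x) \<le> Max (h ` G) + \<delta>" using Sne upb by (intro cSUP_least) auto
  ultimately show ?thesis using y0 y1 by (simp add: abs_le_iff)
qed

lemma aux_div: "((a::real) * P * q - p * (a * Q)) / d = a * ((P * q - p * Q) / d)"
proof -
  have "a * P * q - p * (a * Q) = a * (P * q - p * Q)" by (simp add: algebra_simps)
  then show ?thesis by (simp only: times_divide_eq_right)
qed

lemma linear_expand:
  fixes D :: "real^'n \<Rightarrow> real"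
  assumes "linear D"
  shows "D v = (\<Sum>j\<in>UNIV. v$j * D (axis j 1))"
proof -
  have "D v = D (\<Sum>j\<in>UNIV. v$j *\<^sub>R axis j 1)"
    using basis_expansion[of v] by (simp add: scalar_mult_eq_scaleR)
  also have "\<dots> = (\<Sum>j\<in>UNIV. v$j * D (axis j 1))"
    using assms by (simp add: linear_sum linear_scale)
  finally show ?thesis .
qed

lemma segment_in_box:
  fixes x y :: "real^'n"
  assumes "x \<in> cbox a b" "y \<in> cbox a b" "0 \<le> t" "t \<le> 1"
  shows "y + t *\<^sub>R (x - y) \<in> cbox a b"
proof -
  have "(1 - t) *\<^sub>R y + t *\<^sub>R x \<in> cbox a b"
    using convex_box(1)[of a b] assms unfolding convex_def by auto
  moreover have "(1 - t) *\<^sub>R y + t *\<^sub>R x = y + t *\<^sub>R (x - y)" by (simp add: algebra_simps)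
  ultimately show ?thesis by simp
qed

lemma mvt_quot:
  fixes p q :: "real^'n \<Rightarrow> real"
  assumes p: "is_mpoly p" and q: "is_mpoly q"
    and qnz: "\<And>z. z \<in> cbox a b \<Longrightarrow> q z \<noteq> 0"
    and x: "x \<in> cbox a b" and y: "y \<in> cbox a b"
  shows "\<exists>z\<in>cbox a b. \<bar>p x / q x - p y / q y\<bar> \<le>
     \<bar>\<Sum>j\<in>UNIV. (x$j - y$j) * ((partial j p z * q z - p z * partial j q z) / (q z)^2)\<bar>"
proof -
  define Dp where "Dp z = frechet_derivative p (at z)" for z
  define Dq where "Dq z = frechet_derivative q (at z)" for z
  have hp: "(p has_derivative Dp z) (at z)" for z
    unfolding Dp_def using mpoly_differentiable[OF p] frechet_derivative_works by blast
  have hq: "(q has_derivative Dq z) (at z)" for z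
    unfolding Dq_def using mpoly_differentiable[OF q] frechet_derivative_works by blast
  define Dg where "Dg z v = (Dp z v * q z - p z * Dq z v) / (q z)^2" for z v
  have hg: "((\<lambda>w. p w / q w) has_derivative Dg z) (at z)" if "q z \<noteq> 0" for z
  proof -
    have "((\<lambda>w. p w / q w) has_derivative (\<lambda>h. - p z * (inverse (q z) * Dq z h * inverse (q z)) + Dp z h / q z)) (at z)"
      by (rule has_derivative_divide[OF hp hq that])
    moreover have "(\<lambda>h. - p z * (inverse (q z) * Dq z h * inverse (q z)) + Dp z h / q z) = Dg z"
      using that by (auto simp: fun_eq_iff Dg_def field_simps power2_eq_square)
    ultimately show ?thesis by simp
  qed
  define l where "l t = y + t *\<^sub>R (x - y)" for t :: real
  have hl: "(l has_derivative (\<lambda>s. s *\<^sub>R (x - y))) (at t)" for t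
    unfolding l_def by (auto intro!: derivative_eq_intros)
  define \<phi> where "\<phi> = (\<lambda>w. p w / q w) \<circ> l"
  have lin: "l t \<in> cbox a b" if "0 \<le> t" "t \<le> 1" for t
    unfolding l_def using segment_in_box[OF x y that] .
  have hphi: "(\<phi> has_derivative (Dg (l t) \<circ> (\<lambda>s. s *\<^sub>R (x - y)))) (at t)" if "0 \<le> t" "t \<le> 1" for t
    unfolding \<phi>_def using diff_chain_at[OF hl hg[OF qnz[OF lin[OF that]]]] .
  have cont: "continuous_on {0..1} \<phi>"
    using hphi by (intro continuous_at_imp_continuous_on ballI) (auto dest: has_derivative_continuous)
  obtain t where t: "t \<in> {0<..<1}" "norm (\<phi> 1 - \<phi> 0) \<le> norm ((Dg (l t) \<circ> (\<lambda>s. s *\<^sub>R (x - y))) (1 - 0))"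
    using mvt_general[OF _ cont, of "\<lambda>t. Dg (l t) \<circ> (\<lambda>s. s *\<^sub>R (x - y))"] hphi by force
  define z where "z = l t"
  have z: "z \<in> cbox a b" using t lin by (simp add: z_def)
  have "\<phi> 1 = p x / q x" "\<phi> 0 = p y / q y" by (simp_all add: \<phi>_def l_def)
  then have "\<bar>p x / q x - p y / q y\<bar> \<le> \<bar>Dg z (x - y)\<bar>" using t(2) by (simp add: z_def)
  also have "Dg z (x - y) = (\<Sum>j\<in>UNIV. (x$j - y$j) * ((partial j p z * q z - p z * partial j q z) / (q z)^2))"
  proof -
    have ax: "Dp z (axis j 1) = partial j p z" "Dq z (axis j 1) = partial j q z" for j
      using partial_frechet[OF hp] partial_frechet[OF hq] by simp_all
    have e1: "Dp z (x - y) = (\<Sum>j\<in>UNIV. (x$j - y$j) * partial j p z)"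
      using linear_expand[OF has_derivative_linear[OF hp[of z]], of "x - y"] by (simp add: ax)
    have e2: "Dq z (x - y) = (\<Sum>j\<in>UNIV. (x$j - y$j) * partial j q z)"
      using linear_expand[OF has_derivative_linear[OF hq[of z]], of "x - y"] by (simp add: ax)
    have "(\<Sum>j\<in>UNIV. (x$j - y$j) * partial j p z) * q z - p z * (\<Sum>j\<in>UNIV. (x$j - y$j) * partial j q z)
       = (\<Sum>j\<in>UNIV. (x$j - y$j) * partial j p z * q z - p z * ((x$j - y$j) * partial j q z))"
      by (simp add: sum_distrib_left sum_distrib_right sum_subtractf)
    then have "Dg z (x - y) = (\<Sum>j\<in>UNIV. ((x$j - y$j) * partial j p z * q z - p z * ((x$j - y$j) * partial j q z)) / (q z)^2)"
      unfolding Dg_def e1 e2 by (simp add: sum_divide_distrib)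
    also have "\<dots> = (\<Sum>j\<in>UNIV. (x$j - y$j) * ((partial j p z * q z - p z * partial j q z) / (q z)^2))"
      by (intro sum.cong refl) (rule aux_div)
    finally show ?thesis .
  qed
  finally show ?thesis using z by blast
qed



theorem lemma5p22:
  fixes p q :: "real^'n \<Rightarrow> real" and a b :: "real^'n" and eps :: real
  assumes "is_mpoly p" and "is_mpoly q" and "eps > 0"
    and "\<forall>j. a$j < b$j"
    and "(INF x\<in>cbox a b. \<bar>q x\<bar>) > 0"
  shows "\<bar>min_eps a b eps p q - (INF x\<in>cbox a b. p x / q x)\<bar> \<le> eps / (INF x\<in>cbox a b. (q x)^2) \<and>
         \<bar>max_eps a b eps p q - (SUP x\<in>cbox a b. p x / q x)\<bar> \<le> eps / (INF x\<in>cbox a b. (q x)^2) \<and>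
         \<bar>linf_eps a b eps p q - (SUP x\<in>cbox a b. \<bar>p x / q x\<bar>)\<bar> \<le> eps / (INF x\<in>cbox a b. (q x)^2)"
proof -
  note p = assms(1) and q = assms(2) and eps = assms(3) and ab = assms(4) and qpos = assms(5)
  define n where "n = real CARD('n)"
  have npos: "n > 0" unfolding n_def by simp
  define M where "M j = gridM a b eps p q j" for j
  define F where "F j = (\<lambda>x. partial j p x * q x - p x * partial j q x)" for j
  define Tn where "Tn j = tnorm a b (F j)" for j
  define h where "h j = (b$j - a$j) / real (M j)" for j
  define mq where "mq = (INF x\<in>cbox a b. (q x)^2)"
  define c0 where "c0 = (INF x\<in>cbox a b. \<bar>q x\<bar>)"
  have M: "1 \<le> M j \<and> n / eps * (b$j - a$j) * Tn j \<le> real (M j)" for j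
  proof -
    define R where "R = n / eps * (b$j - a$j) * Tn j"
    have "\<exists>m::nat. 1 \<le> m \<and> R \<le> real m"
      using real_nat_ceiling_ge[of R] by (intro exI[of _ "Suc (nat \<lceil>R\<rceil>)"]) auto
    then have "1 \<le> (LEAST m::nat. 1 \<le> m \<and> R \<le> real m) \<and> R \<le> real (LEAST m::nat. 1 \<le> m \<and> R \<le> real m)"
      by (rule LeastI_ex)
    then show ?thesis unfolding M_def gridM_def R_def n_def Tn_def F_def by simp
  qed
  have Fpoly: "is_mpoly (F j)" for j
    unfolding F_def by (intro mpoly_diff mpoly_mult mpoly_partial p q)
  have Tb: "\<bar>F j x\<bar> \<le> Tn j" if "x \<in> cbox a b" for j x
    unfolding Tn_def
    by (rule tnorm_bound[OF mpoly_affine[OF Fpoly[of j], of "\<lambda>i. (b$i - a$i) / 2" "\<lambda>i. (a$i + b$i) / 2"] ab that])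
  have ain: "a \<in> cbox a b" using ab by (auto simp: mem_box_cart less_imp_le)
  have qge: "c0 \<le> \<bar>q x\<bar>" if "x \<in> cbox a b" for x
    unfolding c0_def
    by (rule cINF_lower[OF _ that]) (unfold bdd_below_def, intro exI[of _ 0], auto)
  have c0pos: "c0 > 0" using qpos by (simp add: c0_def)
  have qnz: "q x \<noteq> 0" if "x \<in> cbox a b" for x using qge[OF that] c0pos by auto
  have qsq: "mq \<le> (q x)^2" if "x \<in> cbox a b" for x
    unfolding mq_def
    by (rule cINF_lower[OF _ that]) (unfold bdd_below_def, intro exI[of _ 0], auto)
  have "c0^2 \<le> mq"
    unfolding mq_def
  proof (rule cINF_greatest)
    show "cbox a b \<noteq> {}" using ain by auto
    fix x assume "x \<in> cbox a b"
    then have "c0^2 \<le> \<bar>q x\<bar>^2" using qge c0pos by (intro power_mono) auto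
    then show "c0^2 \<le> (q x)^2" by simp
  qed
  then have mqpos: "mq > 0" using c0pos by (smt (verit) zero_less_power)
  define Kset where "Kset = {k :: 'n \<Rightarrow> nat. \<forall>j. k j \<le> M j}"
  define gp where "gp k = (\<chi> j. a$j + (b$j - a$j) / real (M j) * real (k j))" for k :: "'n \<Rightarrow> nat"
  have grid_eq: "grid a b eps p q = gp ` Kset"
    unfolding grid_def Kset_def gp_def M_def by auto
  have "Kset = PiE UNIV (\<lambda>j. {..M j})"
    unfolding Kset_def by (auto simp: PiE_UNIV_domain Pi_def)
  then have finK: "finite Kset" by (simp add: finite_PiE)
  have fing: "finite (grid a b eps p q)" using finK grid_eq by simp
  have neg: "grid a b eps p q \<noteq> {}" using grid_eq by (auto simp: Kset_def)
  have Mpos: "real (M j) > 0" for j using M[of j] by simp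
  have gsub: "grid a b eps p q \<subseteq> cbox a b"
  proof
    fix y assume "y \<in> grid a b eps p q"
    then obtain k where k: "k \<in> Kset" "y = gp k" using grid_eq by auto
    show "y \<in> cbox a b"
    proof (unfold mem_box_cart, intro allI conjI)
      fix j
      have d: "b$j - a$j > 0" using ab by simp
      have kM: "real (k j) \<le> real (M j)" using k(1) by (simp add: Kset_def)
      have "0 \<le> (b$j - a$j) / real (M j) * real (k j)" using d Mpos[of j] by simp
      moreover have "(b$j - a$j) / real (M j) * real (k j) \<le> (b$j - a$j) / real (M j) * real (M j)"
        using d Mpos[of j] kM by (intro mult_left_mono) auto
      moreover have "(b$j - a$j) / real (M j) * real (M j) = b$j - a$j" using Mpos[of j] by simp
      ultimately show "a$j \<le> y$j" "y$j \<le> b$j" using k(2) by (auto simp: gp_def)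
    qed
  qed
  have near: "\<exists>y\<in>grid a b eps p q. \<forall>j. \<bar>x$j - y$j\<bar> \<le> h j" if x: "x \<in> cbox a b" for x
  proof -
    define k where "k j = nat \<lfloor>(x$j - a$j) / h j\<rfloor>" for j
    have hpos: "h j > 0" for j using ab Mpos[of j] by (simp add: h_def)
    have props: "k j \<le> M j \<and> \<bar>x$j - (gp k)$j\<bar> \<le> h j" for j
    proof -
      define u where "u = (x$j - a$j) / h j"
      have xj: "a$j \<le> x$j" "x$j \<le> b$j" using x by (auto simp: mem_box_cart)
      have u0: "0 \<le> u" using xj hpos[of j] by (simp add: u_def)
      have uM: "u \<le> real (M j)"
      proof -
        have "u = (x$j - a$j) * real (M j) / (b$j - a$j)" using Mpos[of j] ab by (simp add: u_def h_def)
        also have "\<dots> \<le> (b$j - a$j) * real (M j) / (b$j - a$j)"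
          using xj ab Mpos[of j] by (intro divide_right_mono mult_right_mono) (auto simp: less_imp_le)
        also have "\<dots> = real (M j)"
        proof -
          have "b$j - a$j \<noteq> 0" using ab[rule_format, of j] by simp
          then show ?thesis by simp
        qed
        finally show ?thesis .
      qed
      have kf: "real (k j) = of_int \<lfloor>u\<rfloor>" using u0 by (simp add: k_def u_def)
      have fl: "of_int \<lfloor>u\<rfloor> \<le> u" "u < of_int \<lfloor>u\<rfloor> + 1" by linarith+
      have "real (k j) \<le> real (M j)" using kf fl uM by linarith
      then have "k j \<le> M j" by simp
      moreover have "(gp k)$j = a$j + h j * real (k j)" by (simp add: gp_def h_def)
      moreover have "h j * u = x$j - a$j" using hpos[of j] by (simp add: u_def)
      moreover have "h j * real (k j) \<le> h j * u" "h j * u < h j * (real (k j) + 1)"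
        using kf fl hpos[of j] by (simp_all add: mult_left_mono)
      ultimately show ?thesis by (simp add: algebra_simps abs_le_iff)
    qed
    have "k \<in> Kset" using props by (simp add: Kset_def)
    then show ?thesis using props grid_eq by blast
  qed
  have hT: "h j * Tn j \<le> eps / n" for j
  proof -
    have T0: "Tn j \<ge> 0" using Tb[OF ain, of j] by linarith
    have "n / eps * ((b$j - a$j) * Tn j) \<le> real (M j)" using M[of j] by (simp add: mult.assoc)
    then have "(b$j - a$j) * Tn j \<le> real (M j) * eps / n"
      using eps npos by (simp add: field_simps)
    then have "(b$j - a$j) * Tn j / real (M j) \<le> eps / n"
      using Mpos[of j] by (simp add: field_simps)
    then show ?thesis by (simp add: h_def)
  qed
  have approx: "\<forall>x\<in>cbox a b. \<exists>y\<in>grid a b eps p q. \<bar>p x / q x - p y / q y\<bar> \<le> eps / mq"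
  proof
    fix x assume x: "x \<in> cbox a b"
    obtain y where y: "y \<in> grid a b eps p q" "\<And>j. \<bar>x$j - y$j\<bar> \<le> h j" using near[OF x] by blast
    have yb: "y \<in> cbox a b" using y(1) gsub by auto
    obtain z where z: "z \<in> cbox a b" and
      zb: "\<bar>p x / q x - p y / q y\<bar> \<le> \<bar>\<Sum>j\<in>UNIV. (x$j - y$j) * ((partial j p z * q z - p z * partial j q z) / (q z)^2)\<bar>"
      using mvt_quot[OF p q qnz x yb] by blast
    have "\<bar>\<Sum>j\<in>UNIV. (x$j - y$j) * ((partial j p z * q z - p z * partial j q z) / (q z)^2)\<bar>
        \<le> (\<Sum>j\<in>UNIV. \<bar>(x$j - y$j) * (F j z / (q z)^2)\<bar>)"
      unfolding F_def by (rule sum_abs)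
    also have "\<dots> \<le> (\<Sum>j\<in>(UNIV::'n set). (eps / n) / mq)"
    proof (intro sum_mono)
      fix j :: 'n
      have q2: "(q z)^2 \<ge> mq" using qsq[OF z] .
      have "\<bar>(x$j - y$j) * (F j z / (q z)^2)\<bar> = \<bar>x$j - y$j\<bar> * \<bar>F j z\<bar> / (q z)^2"
        by (simp add: abs_mult)
      also have "\<dots> \<le> \<bar>x$j - y$j\<bar> * \<bar>F j z\<bar> / mq"
        using q2 mqpos by (intro divide_left_mono) (auto, smt (verit) mult_pos_pos)
      also have "\<dots> \<le> h j * Tn j / mq"
        using y(2)[of j] Tb[OF z, of j] mqpos by (intro divide_right_mono mult_mono) auto
      also have "\<dots> \<le> (eps / n) / mq"
        using hT[of j] mqpos by (intro divide_right_mono) auto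
      finally show "\<bar>(x$j - y$j) * (F j z / (q z)^2)\<bar> \<le> (eps / n) / mq" .
    qed
    also have "\<dots> = eps / mq" using npos by (simp add: n_def)
    finally show "\<exists>y\<in>grid a b eps p q. \<bar>p x / q x - p y / q y\<bar> \<le> eps / mq"
      using zb y(1) by (intro bexI[of _ y]) auto
  qed
  have approx2: "\<forall>x\<in>cbox a b. \<exists>y\<in>grid a b eps p q. \<bar>\<bar>p x / q x\<bar> - \<bar>p y / q y\<bar>\<bar> \<le> eps / mq"
  proof
    fix x assume "x \<in> cbox a b"
    then obtain y where "y \<in> grid a b eps p q" "\<bar>p x / q x - p y / q y\<bar> \<le> eps / mq" using approx by blast
    moreover have "\<bar>\<bar>p x / q x\<bar> - \<bar>p y / q y\<bar>\<bar> \<le> \<bar>p x / q x - p y / q y\<bar>" by (rule abs_triangle_ineq3)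
    ultimately show "\<exists>y\<in>grid a b eps p q. \<bar>\<bar>p x / q x\<bar> - \<bar>p y / q y\<bar>\<bar> \<le> eps / mq" by (meson order_trans)
  qed
  show ?thesis
    using approx_minmax[OF gsub fing neg approx] approx_minmax[OF gsub fing neg approx2]
    unfolding min_eps_def max_eps_def linf_eps_def mq_def by simp
qed

end
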